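(* Let $L>0$, $0<\sigma\le1$, $r>0$, and let $f(\mathbf I,\boldsymbol\phi)=\sum_{\boldsymbol\mu\in\mathcal N}f_{\boldsymbol\mu}(\mathbf I)e^{\mathrm i\boldsymbol\mu\cdot\boldsymbol\phi}$ be analytic on $\mathcal D_{L,r,\sigma}$, where $\mathcal N\subset\mathbb Z^n$ is finite. If $r<1/(2n|\mathcal N|)$, then $Qf$ is analytic on $\mathcal D_{L,r,\sigma'}$ for every $0<\sigma'<\sigma$, and $$\|Qf\|_{L,r,\sigma'}\le 2\Big(\frac{4}{\sigma-\sigma'}\Big)^n\frac{\|f\|_{L,r,\sigma}}{L}.$$
   Context: Fix $n\ge2$ and $1\le k\le n$ (here $2\le k\le n$ in the paper). $\mathcal D_{L,r,\sigma}=\{(\mathbf I,\boldsymbol\phi)\in\mathbb C^{2n}:|I_i-L\delta_{i,k}|<rL,\ |\mathrm{Im}\,\phi_i|<\sigma,\ i=1,\dots,n\}$; for functions $2\pi$-periodic in each $\phi_i$, $\|f\|_{L,r,\sigma}=\sup_{\mathcal D_{L,r,\sigma}}|f|$. For $\boldsymbol\mu\in\mathbb Z^n$, $|\boldsymbol\mu|=\max_i|\mu_i|$ and $|\mathcal N|=\sup_{\boldsymbol\mu\in\mathcal N}|\boldsymbol\mu|$. $Qf=-\mathrm i\sum_{\boldsymbol\mu\in\mathcal N,\ \mu_k\neq0}\frac{f_{\boldsymbol\mu}(\mathbf I)}{\mathbf I\cdot\boldsymbol\mu}e^{\mathrm i\boldsymbol\mu\cdot\boldsymbol\phi}$. *)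

theory Defs
  imports "HOL-Analysis.Analysis"
begin

text \<open>Holomorphy (analyticity) of a function of several complex variables on a set:
  complex Frechet differentiability at every point, i.e. the (real) Frechet derivative
  exists and is complex-linear.\<close>
definition cplx_linear2 :: "((complex^'n) \<times> (complex^'n) \<Rightarrow> complex) \<Rightarrow> bool" where
  "cplx_linear2 D \<longleftrightarrow> linear D \<and>
     (\<forall>c I phi. D ((\<chi> i. c * I $ i), (\<chi> i. c * phi $ i)) = c * D (I, phi))"

definition analytic2_on :: "((complex^'n) \<times> (complex^'n) \<Rightarrow> complex) \<Rightarrow> ((complex^'n) \<times> (complex^'n)) set \<Rightarrow> bool" where
  "analytic2_on f S \<longleftrightarrow> (\<forall>z\<in>S. \<exists>D. (f has_derivative D) (at z) \<and> cplx_linear2 D)"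

definition dom_D :: "'n \<Rightarrow> real \<Rightarrow> real \<Rightarrow> real \<Rightarrow> ((complex^'n) \<times> (complex^'n)) set" where
  "dom_D k L r \<sigma> = {(I, phi). \<forall>i. cmod (I $ i - (if i = k then complex_of_real L else 0)) < r * L
                                  \<and> \<bar>Im (phi $ i)\<bar> < \<sigma>}"

definition supnormD :: "'n \<Rightarrow> real \<Rightarrow> real \<Rightarrow> real \<Rightarrow> ((complex^'n) \<times> (complex^'n) \<Rightarrow> complex) \<Rightarrow> ereal" where
  "supnormD k L r \<sigma> f = (SUP z\<in>dom_D k L r \<sigma>. ereal (cmod (f z)))"

definition mu_norm :: "int^'n \<Rightarrow> int" where
  "mu_norm \<mu> = Max (range (\<lambda>i. \<bar>\<mu> $ i\<bar>))"

text \<open>|N| = sup of |mu| over N (taken to be 0 for empty N).\<close>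
definition set_norm :: "(int^'n) set \<Rightarrow> int" where
  "set_norm N = Max (insert 0 (mu_norm ` N))"

definition cdot :: "complex^'n \<Rightarrow> int^'n \<Rightarrow> complex" where
  "cdot x \<mu> = (\<Sum>i\<in>UNIV. x $ i * of_int (\<mu> $ i))"

definition fourier :: "(int^'n) set \<Rightarrow> (int^'n \<Rightarrow> complex^'n \<Rightarrow> complex) \<Rightarrow> (complex^'n) \<times> (complex^'n) \<Rightarrow> complex" where
  "fourier N fc = (\<lambda>(I, phi). \<Sum>\<mu>\<in>N. fc \<mu> I * exp (\<i> * cdot phi \<mu>))"

definition Qop :: "'n \<Rightarrow> (int^'n) set \<Rightarrow> (int^'n \<Rightarrow> complex^'n \<Rightarrow> complex) \<Rightarrow> (complex^'n) \<times> (complex^'n) \<Rightarrow> complex" where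
  "Qop k N fc = (\<lambda>(I, phi). - \<i> * (\<Sum>\<mu>\<in>{\<mu>\<in>N. \<mu> $ k \<noteq> 0}. fc \<mu> I / cdot I \<mu> * exp (\<i> * cdot phi \<mu>)))"

end

theory Submission imports Defs begin
lemma prod_sum_vec:
  fixes g :: "'n::finite \<Rightarrow> 'a \<Rightarrow> 'c::comm_semiring_1"
  assumes "finite A"
  shows "(\<Prod>i\<in>UNIV. \<Sum>a\<in>A. g i a) = (\<Sum>v\<in>{v::'a^'n. \<forall>i. v$i \<in> A}. \<Prod>i\<in>UNIV. g i (v$i))"
proof -
  have "(\<Prod>i\<in>UNIV. \<Sum>a\<in>A. g i a) = (\<Sum>h\<in>PiE UNIV (\<lambda>_. A). \<Prod>i\<in>UNIV. g i (h i))"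
    by (rule prod_sum_PiE) (use assms in auto)
  also have "\<dots> = (\<Sum>v\<in>vec_lambda ` PiE UNIV (\<lambda>_. A). \<Prod>i\<in>UNIV. g i (v$i))"
    by (subst sum.reindex) (auto intro: inj_onI simp: vec_lambda_inject)
  also have "vec_lambda ` PiE UNIV (\<lambda>_. A) = {v::'a^'n. \<forall>i. v$i \<in> A}"
  proof
    show "{v::'a^'n. \<forall>i. v$i \<in> A} \<subseteq> vec_lambda ` PiE UNIV (\<lambda>_. A)"
    proof
      fix v :: "'a^'n" assume "v \<in> {v. \<forall>i. v$i \<in> A}"
      then have "vec_nth v \<in> PiE UNIV (\<lambda>_. A)" by auto
      moreover have "v = vec_lambda (vec_nth v)" by simp
      ultimately show "v \<in> vec_lambda ` PiE UNIV (\<lambda>_. A)" by blast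
    qed
  qed auto
  finally show ?thesis .
qed

lemma root_sum:
  fixes d :: int and M :: nat
  assumes "\<bar>d\<bar> < int M"
  shows "(\<Sum>x\<in>{0..<int M}. exp (\<i> * complex_of_real (2*pi*real_of_int x / real M) * of_int d)) = (if d = 0 then of_nat M else 0)"
proof (cases "d = 0")
  case True then show ?thesis by simp
next
  case False
  define w where "w = exp (\<i> * complex_of_real (2*pi*real_of_int d / real M))"
  have M0: "M > 0" using assms by auto
  have eq: "exp (\<i> * complex_of_real (2*pi*real_of_int x / real M) * of_int d) = w ^ nat x" if "x \<ge> 0" for x :: int
  proof -
    have "w ^ nat x = exp (of_nat (nat x) * (\<i> * complex_of_real (2*pi*real_of_int d / real M)))"
      unfolding w_def by (rule exp_of_nat_mult[symmetric])
    also have "\<dots> = exp (\<i> * complex_of_real (2*pi*real_of_int x / real M) * of_int d)"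
      using that by (intro arg_cong[where f=exp]) (simp add: field_simps)
    finally show ?thesis by simp
  qed
  have "(\<Sum>x\<in>{0..<int M}. exp (\<i> * complex_of_real (2*pi*real_of_int x / real M) * of_int d)) = (\<Sum>x\<in>{0..<int M}. w ^ nat x)"
    by (rule sum.cong[OF refl], rule eq) auto
  also have "\<dots> = (\<Sum>x<M. w ^ x)"
    by (rule sum.reindex_bij_witness[where i=int and j=nat]) auto
  also have "w \<noteq> 1"
  proof
    assume "w = 1"
    then obtain m :: int where m: "2*pi*real_of_int d / real M = 2 * pi * of_int m"
      unfolding w_def exp_eq_1 by auto
    then have "real_of_int d = real M * of_int m" using M0 by (simp add: field_simps)
    then have "d = int M * m" by (metis of_int_eq_iff of_int_mult of_int_of_nat_eq)
    with False have "m \<noteq> 0" by auto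
    then have "\<bar>m\<bar> \<ge> 1" by linarith
    then have "int M * 1 \<le> int M * \<bar>m\<bar>" by (intro mult_left_mono) auto
    with \<open>d = int M * m\<close> assms show False by (simp add: abs_mult)
  qed
  then have "(\<Sum>x<M. w ^ x) = (1 - w^M) / (1 - w)" by (simp add: sum_gp_strict)
  also have "w ^ M = 1"
  proof -
    have "w ^ M = exp (of_nat M * (\<i> * complex_of_real (2*pi*real_of_int d / real M)))"
      unfolding w_def by (rule exp_of_nat_mult[symmetric])
    also have "\<dots> = exp (2 * pi * of_int d * \<i>)" using M0 by (intro arg_cong[where f=exp]) (simp add: field_simps)
    also have "\<dots> = 1" by (simp add: exp_eq_1)
    finally show ?thesis .
  qed
  finally show ?thesis using False by simp
qed
definition grid :: "nat \<Rightarrow> (int^'n) set" where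
  "grid M = {j. \<forall>i. j$i \<in> {0..<int M}}"
definition gpt :: "nat \<Rightarrow> complex^'n \<Rightarrow> int^'n \<Rightarrow> complex^'n" where
  "gpt M w j = (\<chi> i. complex_of_real (2*pi*real_of_int (j$i) / real M) + w$i)"

lemma vecset: "{v::'a^'n::finite. \<forall>i. v$i \<in> A} = vec_lambda ` PiE UNIV (\<lambda>_. A)"
proof
  show "{v::'a^'n. \<forall>i. v$i \<in> A} \<subseteq> vec_lambda ` PiE UNIV (\<lambda>_. A)"
  proof
    fix v :: "'a^'n" assume "v \<in> {v. \<forall>i. v$i \<in> A}"
    then have "vec_nth v \<in> PiE UNIV (\<lambda>_. A)" by auto
    moreover have "v = vec_lambda (vec_nth v)" by simp
    ultimately show "v \<in> vec_lambda ` PiE UNIV (\<lambda>_. A)" by blast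
  qed
qed auto

lemma finite_grid: "finite (grid M :: (int^'n::finite) set)"
  unfolding grid_def vecset by (intro finite_imageI finite_PiE) auto

lemma card_grid: "card (grid M :: (int^'n::finite) set) = M ^ CARD('n)"
proof -
  have "card (grid M :: (int^'n::finite) set) = card (PiE (UNIV::'n set) (\<lambda>_. {0..<int M}))"
    unfolding grid_def vecset by (intro card_image inj_onI) (auto simp: vec_lambda_inject)
  also have "\<dots> = M ^ CARD('n)" by (simp add: card_PiE)
  finally show ?thesis .
qed

lemma cdot_minus: "cdot x (\<nu> - \<mu>) = cdot x \<nu> - cdot x \<mu>"
  unfolding cdot_def by (simp add: sum_subtractf algebra_simps)

lemma orth:
  fixes d :: "int^'n::finite"
  assumes "\<forall>i. \<bar>d$i\<bar> < int M"
  shows "(\<Sum>j\<in>grid M. exp (\<i> * cdot (gpt M w j) d)) = (if d = 0 then of_nat M ^ CARD('n) else 0)"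
proof -
  define g where "g i x = exp (\<i> * w$i * of_int (d$i)) * exp (\<i> * complex_of_real (2*pi*real_of_int x / real M) * of_int (d$i))" for i x
  have e: "exp (\<i> * cdot (gpt M w j) d) = (\<Prod>i\<in>UNIV. g i (j$i))" for j
  proof -
    have "exp (\<i> * cdot (gpt M w j) d) = exp (\<Sum>i\<in>UNIV. \<i> * (gpt M w j $ i) * of_int (d$i))"
      unfolding cdot_def by (simp add: sum_distrib_left mult.assoc)
    also have "\<dots> = (\<Prod>i\<in>UNIV. exp (\<i> * (gpt M w j $ i) * of_int (d$i)))" by (simp add: exp_sum)
    also have "\<dots> = (\<Prod>i\<in>UNIV. g i (j$i))"
      by (rule prod.cong[OF refl]) (simp add: g_def gpt_def exp_add[symmetric] algebra_simps)
    finally show ?thesis .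
  qed
  have "(\<Sum>j\<in>grid M. exp (\<i> * cdot (gpt M w j) d)) = (\<Sum>j\<in>grid M. \<Prod>i\<in>UNIV. g i (j$i))"
    by (simp add: e)
  also have "\<dots> = (\<Prod>i\<in>UNIV. \<Sum>x\<in>{0..<int M}. g i x)"
    unfolding grid_def by (rule prod_sum_vec[symmetric]) simp
  also have "\<dots> = (\<Prod>i\<in>UNIV. exp (\<i> * w$i * of_int (d$i)) * (if d$i = 0 then of_nat M else 0))"
    unfolding g_def sum_distrib_left[symmetric] by (rule prod.cong[OF refl], subst root_sum) (use assms in auto)
  also have "\<dots> = (if d = 0 then of_nat M ^ CARD('n) else 0)"
  proof (cases "d = 0")
    case True then show ?thesis by simp
  next
    case False
    then obtain i where "d$i \<noteq> 0" by (metis vec_eq_iff zero_index)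
    then show ?thesis using False by (intro trans[OF prod_zero]) auto
  qed
  finally show ?thesis .
qed

lemma coeff_extract:
  fixes N :: "(int^'n::finite) set" and fc :: "int^'n \<Rightarrow> complex^'n \<Rightarrow> complex"
  assumes "finite N" "\<mu> \<in> N" "\<forall>\<nu>\<in>N. \<forall>i. \<bar>\<nu>$i - \<mu>$i\<bar> < int M" "M > 0"
  shows "fc \<mu> I = (\<Sum>j\<in>grid M. fourier N fc (I, gpt M w j) * exp (- (\<i> * cdot (gpt M w j) \<mu>))) / of_nat M ^ CARD('n)"
proof -
  have "(\<Sum>j\<in>grid M. fourier N fc (I, gpt M w j) * exp (- (\<i> * cdot (gpt M w j) \<mu>)))
      = (\<Sum>j\<in>grid M. \<Sum>\<nu>\<in>N. fc \<nu> I * exp (\<i> * cdot (gpt M w j) (\<nu> - \<mu>)))"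
    unfolding fourier_def cdot_minus
    by (rule sum.cong[OF refl]) (simp add: sum_distrib_right mult.assoc exp_diff right_diff_distrib exp_minus divide_inverse)
  also have "\<dots> = (\<Sum>\<nu>\<in>N. fc \<nu> I * (\<Sum>j\<in>grid M. exp (\<i> * cdot (gpt M w j) (\<nu> - \<mu>))))"
    by (subst sum.swap) (simp add: sum_distrib_left)
  also have "\<dots> = (\<Sum>\<nu>\<in>N. if \<nu> = \<mu> then fc \<mu> I * of_nat M ^ CARD('n) else 0)"
    by (rule sum.cong[OF refl], subst orth) (use assms in auto)
  also have "\<dots> = fc \<mu> I * of_nat M ^ CARD('n)" using assms by simp
  finally show ?thesis using assms by simp
qed

definition an2 :: "((complex^'n) \<times> (complex^'n) \<Rightarrow> complex) \<Rightarrow> (complex^'n) \<times> (complex^'n) \<Rightarrow> bool" where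
  "an2 f z \<longleftrightarrow> (\<exists>D. (f has_derivative D) (at z) \<and> cplx_linear2 D)"

lemma an2_const: "an2 (\<lambda>_. c) z"
  unfolding an2_def cplx_linear2_def
  by (rule exI[of _ "\<lambda>_. 0"]) (auto intro: derivative_intros linear_zero)

lemma an2_add: "an2 f z \<Longrightarrow> an2 g z \<Longrightarrow> an2 (\<lambda>x. f x + g x) z"
  unfolding an2_def cplx_linear2_def
  apply (elim exE conjE)
  subgoal for D E
    by (rule exI[of _ "\<lambda>h. D h + E h"]) (auto intro: derivative_intros linear_add linear_compose_add simp: algebra_simps)
  done

lemma an2_mult: "an2 f z \<Longrightarrow> an2 g z \<Longrightarrow> an2 (\<lambda>x. f x * g x) z"
  unfolding an2_def cplx_linear2_def
  apply (elim exE conjE)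
  subgoal for D E
    apply (rule exI[of _ "\<lambda>h. f z * E h + D h * g z"])
    apply (intro conjI)
      apply (rule has_derivative_mult; assumption)
     apply (rule has_derivative_linear, rule has_derivative_mult; assumption)
    apply (auto simp: algebra_simps)
    done
  done

lemma an2_sum: "finite A \<Longrightarrow> (\<And>a. a \<in> A \<Longrightarrow> an2 (f a) z) \<Longrightarrow> an2 (\<lambda>x. \<Sum>a\<in>A. f a x) z"
  by (induction A rule: finite_induct) (auto intro: an2_const an2_add)

lemma an2_inverse:
  assumes "an2 f z" "f z \<noteq> 0" shows "an2 (\<lambda>x. inverse (f x)) z"
proof -
  obtain D where D: "(f has_derivative D) (at z)" "\<forall>c I phi. D ((\<chi> i. c * I $ i), (\<chi> i. c * phi $ i)) = c * D (I, phi)"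
    using assms unfolding an2_def cplx_linear2_def by blast
  have d: "((\<lambda>x. inverse (f x)) has_derivative (\<lambda>h. - (inverse (f z) * D h * inverse (f z)))) (at z)"
    using Deriv.has_derivative_inverse[OF assms(2) D(1)] .
  show ?thesis unfolding an2_def cplx_linear2_def using d has_derivative_linear[OF d] D(2)
    by (intro exI[of _ "\<lambda>h. - (inverse (f z) * D h * inverse (f z))"]) (auto simp: algebra_simps)
qed

lemma an2_exp:
  assumes "an2 f z" shows "an2 (\<lambda>x. exp (f x)) z"
proof -
  obtain D where D: "(f has_derivative D) (at z)" "\<forall>c I phi. D ((\<chi> i. c * I $ i), (\<chi> i. c * phi $ i)) = c * D (I, phi)"
    using assms unfolding an2_def cplx_linear2_def by blast
  have e: "(exp has_derivative (\<lambda>h. exp (f z) * h)) (at (f z))"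
    using DERIV_exp[of "f z", unfolded has_field_derivative_def] .
  have d: "((\<lambda>x. exp (f x)) has_derivative (\<lambda>h. exp (f z) * D h)) (at z)"
    using has_derivative_compose[OF D(1) e] .
  show ?thesis unfolding an2_def cplx_linear2_def using d has_derivative_linear[OF d] D(2)
    by (intro exI[of _ "\<lambda>h. exp (f z) * D h"]) (auto simp: algebra_simps)
qed

lemma an2_linear: "linear D \<Longrightarrow> (\<And>c I phi. D ((\<chi> i. c * I $ i), (\<chi> i. c * phi $ i)) = c * D (I, phi)) \<Longrightarrow> an2 D z"
  unfolding an2_def cplx_linear2_def
  by (rule exI[of _ D]) (auto intro: linear_imp_has_derivative)

lemma cdot_add: "cdot (x + y) \<mu> = cdot x \<mu> + cdot y \<mu>"
  unfolding cdot_def by (simp add: algebra_simps sum.distrib)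
lemma cdot_scaleR: "cdot (r *\<^sub>R x) \<mu> = r *\<^sub>R cdot x \<mu>"
  unfolding cdot_def by (simp add: scaleR_sum_right)
lemma cdot_cmult: "cdot (\<chi> i. c * x $ i) \<mu> = c * cdot x \<mu>"
  unfolding cdot_def by (simp add: sum_distrib_left algebra_simps)

lemma an2_cdot_fst: "an2 (\<lambda>x. cdot (fst x) \<mu>) z"
  by (rule an2_linear) (auto intro!: linearI simp: cdot_add cdot_scaleR cdot_cmult)

lemma an2_cdot_snd: "an2 (\<lambda>x. cdot (snd x) \<mu>) z"
  by (rule an2_linear) (auto intro!: linearI simp: cdot_add cdot_scaleR cdot_cmult)

lemma an2_slice:
  assumes "an2 f (fst z, c)" shows "an2 (\<lambda>x. f (fst x, c)) z"
proof -
  obtain D where D: "(f has_derivative D) (at (fst z, c))" "\<forall>c I phi. D ((\<chi> i. c * I $ i), (\<chi> i. c * phi $ i)) = c * D (I, phi)"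
    using assms unfolding an2_def cplx_linear2_def by blast
  have p: "((\<lambda>x. (fst x, c)) has_derivative (\<lambda>h. (fst h, 0))) (at z)"
    by (auto intro!: derivative_eq_intros)
  have d: "((\<lambda>x. f (fst x, c)) has_derivative (\<lambda>h. D (fst h, 0))) (at z)"
    using has_derivative_compose[OF p, of f D] D(1) by simp
  have "D ((\<chi> i. c' * I $ i), 0) = c' * D (I, 0)" for c' I
    using D(2)[rule_format, of c' I 0] by (simp add: zero_vec_def)
  then show ?thesis unfolding an2_def cplx_linear2_def using d has_derivative_linear[OF d]
    by (intro exI[of _ "\<lambda>h. D (fst h, 0)"]) auto
qed

lemma an2_transform: "an2 f z \<Longrightarrow> open S \<Longrightarrow> z \<in> S \<Longrightarrow> (\<And>x. x \<in> S \<Longrightarrow> f x = g x) \<Longrightarrow> an2 g z"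
  unfolding an2_def using has_derivative_transform_within_open by blast


lemma open_dom: "open (dom_D (k::'n::finite) L r \<sigma>)"
proof -
  have "dom_D k L r \<sigma> = (\<Inter>i\<in>UNIV. {z. cmod (fst z $ i - (if i = k then complex_of_real L else 0)) < r * L}
        \<inter> {z. \<bar>Im (snd z $ i)\<bar> < \<sigma>})"
    unfolding dom_D_def by (rule set_eqI) (simp add: case_prod_beta)
  also have "open \<dots>"
    by (intro open_INT finite_UNIV ballI open_Int open_Collect_less) (auto intro!: continuous_intros)
  finally show ?thesis .
qed

lemma mu_bound:
  assumes "finite N" "\<mu> \<in> N"
  shows "\<bar>\<mu> $ i\<bar> \<le> set_norm N"
proof -
  have "\<bar>\<mu> $ i\<bar> \<le> mu_norm \<mu>" unfolding mu_norm_def by (rule Max_ge) auto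
  also have "\<dots> \<le> set_norm N" unfolding set_norm_def using assms by (intro Max_ge) auto
  finally show ?thesis .
qed

lemma denom_bound:
  fixes k :: "'n::finite" and I :: "complex^'n" and \<mu> :: "int^'n"
  assumes L: "L > 0" and I: "\<forall>i. cmod (I $ i - (if i = k then complex_of_real L else 0)) < r * L"
    and mu: "\<forall>i. \<bar>\<mu> $ i\<bar> \<le> K" and muk: "\<mu> $ k \<noteq> 0"
    and small: "r * (2 * real CARD('n) * real_of_int K) < 1"
  shows "cmod (cdot I \<mu>) > L / 2"
proof -
  define e where "e i = I $ i - (if i = k then complex_of_real L else 0)" for i
  have r0: "r \<ge> 0" using I L by (metis norm_ge_zero order_le_less_trans mult_less_0_iff not_le less_imp_le)
  have "cdot I \<mu> = (\<Sum>i\<in>UNIV. (if i = k then complex_of_real L else 0) * of_int (\<mu>$i)) + (\<Sum>i\<in>UNIV. e i * of_int (\<mu>$i))"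
    unfolding cdot_def e_def by (simp add: sum.distrib[symmetric] algebra_simps)
  also have "(\<Sum>i\<in>UNIV. (if i = k then complex_of_real L else 0) * of_int (\<mu>$i)) = complex_of_real L * of_int (\<mu>$k)"
    by (subst sum.cong[OF refl, of _ _ "\<lambda>i. if i = k then complex_of_real L * of_int (\<mu>$k) else 0"]) auto
  finally have eq: "cdot I \<mu> = complex_of_real L * of_int (\<mu>$k) + (\<Sum>i\<in>UNIV. e i * of_int (\<mu>$i))" .
  have "cmod (\<Sum>i\<in>UNIV. e i * of_int (\<mu>$i)) \<le> (\<Sum>i\<in>UNIV. cmod (e i * of_int (\<mu>$i)))"
    by (rule norm_sum)
  also have "\<dots> \<le> (\<Sum>i\<in>(UNIV::'n set). r * L * K)"
  proof (rule sum_mono)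
    fix i
    have "cmod (e i * of_int (\<mu>$i)) = cmod (e i) * \<bar>real_of_int (\<mu>$i)\<bar>" by (simp add: norm_mult)
    also have "\<dots> \<le> (r * L) * K"
    proof (rule mult_mono)
      show "cmod (e i) \<le> r * L" using I[rule_format, of i] unfolding e_def by simp
      show "\<bar>real_of_int (\<mu>$i)\<bar> \<le> real_of_int K" using mu[rule_format, of i]
        by (metis of_int_abs of_int_le_iff)
      show "0 \<le> r * L" using r0 L by simp
    qed simp
    finally show "cmod (e i * of_int (\<mu>$i)) \<le> r * L * K" .
  qed
  also have "\<dots> = real CARD('n) * r * L * K" by simp
  also have "\<dots> < L / 2"
  proof -
    have "real CARD('n) * r * L * K = L * (r * (real CARD('n) * K))" by simp
    also have "\<dots> < L * (1/2)" using small L by (intro mult_strict_left_mono) auto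
    finally show ?thesis by simp
  qed
  finally have s: "cmod (\<Sum>i\<in>UNIV. e i * of_int (\<mu>$i)) < L / 2" .
  have "cmod (complex_of_real L * of_int (\<mu>$k)) = L * \<bar>real_of_int (\<mu>$k)\<bar>" using L by (simp add: norm_mult)
  also have "\<dots> \<ge> L * 1" using muk L by (intro mult_left_mono) auto
  finally have "cmod (complex_of_real L * of_int (\<mu>$k)) \<ge> L" by simp
  then show ?thesis unfolding eq using s norm_triangle_ineq2[of "complex_of_real L * of_int (\<mu>$k)" "- (\<Sum>i\<in>UNIV. e i * of_int (\<mu>$i))"]
    by simp
qed

definition l1 :: "int^'n::finite \<Rightarrow> real" where
  "l1 \<mu> = (\<Sum>i\<in>UNIV. \<bar>real_of_int (\<mu>$i)\<bar>)"

lemma coeff_bound: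
  fixes N :: "(int^'n::finite) set" and fc :: "int^'n \<Rightarrow> complex^'n \<Rightarrow> complex" and k :: 'n
  assumes N: "finite N" "\<mu> \<in> N" and K: "\<forall>\<nu>\<in>N. \<forall>i. \<bar>\<nu>$i\<bar> \<le> K"
    and I: "\<forall>i. cmod (I $ i - (if i = k then complex_of_real L else 0)) < r * L"
    and t: "0 \<le> t" "t < \<sigma>"
    and hS: "\<forall>p\<in>dom_D k L r \<sigma>. cmod (fourier N fc p) \<le> S"
  shows "cmod (fc \<mu> I) \<le> S * exp (- t * l1 \<mu>)"
proof -
  have K0: "K \<ge> 0" using K N by (metis abs_ge_zero order_trans)
  define M where "M = nat (2*K+1)"
  have M: "int M = 2*K+1" "M > 0" using K0 unfolding M_def by auto
  define w :: "complex^'n" where "w = (\<chi> i. \<i> * complex_of_real (- t * sgn (real_of_int (\<mu>$i))))"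
  have diff: "\<forall>\<nu>\<in>N. \<forall>i. \<bar>\<nu>$i - \<mu>$i\<bar> < int M"
  proof (intro ballI allI)
    fix \<nu> i assume "\<nu> \<in> N"
    then have "\<bar>\<nu>$i\<bar> \<le> K" "\<bar>\<mu>$i\<bar> \<le> K" using K N by auto
    then show "\<bar>\<nu>$i - \<mu>$i\<bar> < int M" using M by linarith
  qed
  have ce: "fc \<mu> I = (\<Sum>j\<in>grid M. fourier N fc (I, gpt M w j) * exp (- (\<i> * cdot (gpt M w j) \<mu>))) / of_nat M ^ CARD('n)"
    by (rule coeff_extract[OF N diff M(2)])
  have Imp: "Im (gpt M w j $ i) = - t * sgn (real_of_int (\<mu>$i))" for j i
    unfolding gpt_def w_def by simp
  have mem: "(I, gpt M w j) \<in> dom_D k L r \<sigma>" for j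
  proof -
    have "\<bar>Im (gpt M w j $ i)\<bar> < \<sigma>" for i
    proof -
      have "\<bar>- t * sgn (real_of_int (\<mu>$i))\<bar> \<le> t" using t by (simp add: abs_mult abs_sgn_eq)
      then show ?thesis using Imp t by simp
    qed
    then show ?thesis using I unfolding dom_D_def by auto
  qed
  have ex: "cmod (exp (- (\<i> * cdot (gpt M w j) \<mu>))) = exp (- t * l1 \<mu>)" for j
  proof -
    have "Re (- (\<i> * cdot (gpt M w j) \<mu>)) = Im (cdot (gpt M w j) \<mu>)" by simp
    also have "\<dots> = (\<Sum>i\<in>UNIV. Im (gpt M w j $ i) * real_of_int (\<mu>$i))"
      unfolding cdot_def by (simp add: Im_sum)
    also have "\<dots> = (\<Sum>i\<in>UNIV. - t * \<bar>real_of_int (\<mu>$i)\<bar>)"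
      by (rule sum.cong[OF refl]) (simp add: Imp sgn_if)
    also have "\<dots> = - t * l1 \<mu>" unfolding l1_def by (simp add: sum_distrib_left)
    finally show ?thesis by simp
  qed
  have "cmod (fc \<mu> I) = cmod (\<Sum>j\<in>grid M. fourier N fc (I, gpt M w j) * exp (- (\<i> * cdot (gpt M w j) \<mu>))) / real M ^ CARD('n)"
    unfolding ce by (simp add: norm_divide norm_power)
  also have "\<dots> \<le> (\<Sum>j\<in>(grid M :: (int^'n) set). S * exp (- t * l1 \<mu>)) / real M ^ CARD('n)"
  proof (rule divide_right_mono)
    show "cmod (\<Sum>j\<in>grid M. fourier N fc (I, gpt M w j) * exp (- (\<i> * cdot (gpt M w j) \<mu>))) \<le> (\<Sum>j\<in>(grid M :: (int^'n) set). S * exp (- t * l1 \<mu>))"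
      by (rule order_trans[OF norm_sum], rule sum_mono)
         (simp only: norm_mult ex, rule mult_right_mono, simp add: hS mem, simp)
  qed simp
  also have "\<dots> = S * exp (- t * l1 \<mu>)" using M by (simp add: card_grid)
  finally show ?thesis .
qed

lemma geo_half:
  fixes \<delta> :: real assumes d: "\<delta> > 0"
  shows "(\<Sum>m\<in>{1..n}. exp (- \<delta> * real m)) \<le> 1 / \<delta>"
proof -
  define q where "q = exp (- \<delta>)"
  have q: "0 < q" "q < 1" using d unfolding q_def by auto
  have qm: "exp (- \<delta> * real m) = q ^ m" for m
    unfolding q_def by (simp add: exp_of_nat_mult[symmetric] mult.commute)
  have "(\<Sum>m\<in>{1..n}. q ^ m) = (\<Sum>m\<le>n. q ^ m) - 1"
  proof -
    have "{..n} = insert 0 {1..n}" by auto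
    then show ?thesis by simp
  qed
  also have "(\<Sum>m\<le>n. q ^ m) = (1 - q ^ Suc n) / (1 - q)" using q by (simp add: sum_gp0)
  also have "\<dots> \<le> 1 / (1 - q)" using q by (intro divide_right_mono) auto
  finally have "(\<Sum>m\<in>{1..n}. q ^ m) \<le> 1 / (1 - q) - 1" by simp
  also have "1 / (1 - q) - 1 = q / (1 - q)" using q by (simp add: field_simps)
  also have "\<dots> \<le> 1 / \<delta>"
  proof -
    have "1 + \<delta> \<le> exp \<delta>" by (rule exp_ge_add_one_self)
    then have "q * (1 + \<delta>) \<le> q * exp \<delta>" using q by simp
    also have "q * exp \<delta> = 1" unfolding q_def by (simp add: exp_minus)
    finally have "q * \<delta> \<le> 1 - q" by (simp add: algebra_simps)
    then show ?thesis using q d by (simp add: field_simps)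
  qed
  finally show ?thesis by (simp only: qm)
qed

lemma geo_box:
  fixes \<delta> :: real and K :: int assumes d: "\<delta> > 0"
  shows "(\<Sum>m\<in>{-K..K}. exp (- \<delta> * \<bar>real_of_int m\<bar>)) \<le> 1 + 2 / \<delta>"
proof (cases "K < 0")
  case True then show ?thesis using d by simp
next
  case False
  then obtain n where n: "K = int n" by (metis nonneg_int_cases not_less)
  have T: "(\<Sum>m\<in>{-int n..int n}. exp (- \<delta> * \<bar>real_of_int m\<bar>)) = 1 + 2 * (\<Sum>m\<in>{1..n}. exp (- \<delta> * real m))" for n
  proof (induction n)
    case 0 then show ?case by simp
  next
    case (Suc n)
    have "{-int (Suc n)..int (Suc n)} = insert (- int (Suc n)) (insert (int (Suc n)) {-int n..int n})" by auto
    then have "(\<Sum>m\<in>{-int (Suc n)..int (Suc n)}. exp (- \<delta> * \<bar>real_of_int m\<bar>))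
       = exp (- \<delta> * real (Suc n)) + exp (- \<delta> * real (Suc n)) + (\<Sum>m\<in>{-int n..int n}. exp (- \<delta> * \<bar>real_of_int m\<bar>))"
      by simp
    also have "\<dots> = 1 + 2 * (\<Sum>m\<in>{1..Suc n}. exp (- \<delta> * real m))" using Suc by simp
    finally show ?case .
  qed
  show ?thesis unfolding n T using geo_half[OF d, of n] by simp
qed

lemma box_sum:
  fixes N :: "(int^'n::finite) set"
  assumes N: "finite N" and K: "\<forall>\<mu>\<in>N. \<forall>i. \<bar>\<mu>$i\<bar> \<le> K" and d: "\<delta> > 0"
  shows "(\<Sum>\<mu>\<in>N. exp (- \<delta> * l1 \<mu>)) \<le> (1 + 2 / \<delta>) ^ CARD('n)"
proof -
  define B where "B = {v::int^'n. \<forall>i. v$i \<in> {-K..K}}"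
  have fB: "finite B" unfolding B_def vecset by (intro finite_imageI finite_PiE) auto
  have sub: "N \<subseteq> B"
  proof
    fix x assume "x \<in> N"
    then have "\<bar>x$i\<bar> \<le> K" for i using K by auto
    then have "- K \<le> x$i \<and> x$i \<le> K" for i by (metis abs_le_iff minus_le_iff)
    then show "x \<in> B" unfolding B_def by auto
  qed
  have e: "exp (- \<delta> * l1 v) = (\<Prod>i\<in>UNIV. exp (- \<delta> * \<bar>real_of_int (v$i)\<bar>))" for v :: "int^'n"
    unfolding l1_def by (simp add: sum_distrib_left exp_sum)
  have "(\<Sum>\<mu>\<in>N. exp (- \<delta> * l1 \<mu>)) \<le> (\<Sum>\<mu>\<in>B. exp (- \<delta> * l1 \<mu>))"
    by (rule sum_mono2[OF fB sub]) simp
  also have "\<dots> = (\<Prod>i\<in>(UNIV::'n set). \<Sum>m\<in>{-K..K}. exp (- \<delta> * \<bar>real_of_int m\<bar>))"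
    unfolding e B_def by (rule prod_sum_vec[symmetric]) simp
  also have "\<dots> \<le> (\<Prod>i\<in>(UNIV::'n set). 1 + 2 / \<delta>)"
    by (rule prod_mono) (use geo_box[OF d, of K] in \<open>auto intro: sum_nonneg\<close>)
  also have "\<dots> = (1 + 2 / \<delta>) ^ CARD('n)" by simp
  finally show ?thesis .
qed

lemma set_norm_nonneg: "finite N \<Longrightarrow> set_norm N \<ge> 0"
  unfolding set_norm_def by (intro Max_ge) auto

lemma exp_phi_bound:
  assumes "\<forall>i. \<bar>Im (phi $ i)\<bar> < s"
  shows "cmod (exp (\<i> * cdot phi \<mu>)) \<le> exp (s * l1 \<mu>)"
proof -
  have "Re (\<i> * cdot phi \<mu>) = (\<Sum>i\<in>UNIV. - Im (phi $ i) * real_of_int (\<mu>$i))"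
    unfolding cdot_def by (simp add: Im_sum sum_negf)
  also have "\<dots> \<le> (\<Sum>i\<in>UNIV. s * \<bar>real_of_int (\<mu>$i)\<bar>)"
  proof (rule sum_mono)
    fix i
    have "- Im (phi $ i) * real_of_int (\<mu>$i) \<le> \<bar>Im (phi $ i)\<bar> * \<bar>real_of_int (\<mu>$i)\<bar>"
      by (metis abs_ge_self abs_minus_cancel abs_mult mult_minus_left)
    also have "\<dots> \<le> s * \<bar>real_of_int (\<mu>$i)\<bar>" using assms[rule_format, of i] by (intro mult_right_mono) auto
    finally show "- Im (phi $ i) * real_of_int (\<mu>$i) \<le> s * \<bar>real_of_int (\<mu>$i)\<bar>" .
  qed
  also have "\<dots> = s * l1 \<mu>" unfolding l1_def by (simp add: sum_distrib_left)
  finally show ?thesis by simp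
qed

theorem propositionA3:
  fixes k :: "'n::finite" and L r \<sigma> :: real
    and N :: "(int^'n) set" and fc :: "int^'n \<Rightarrow> complex^'n \<Rightarrow> complex"
  assumes "CARD('n) \<ge> 2"
    and "L > 0" and "0 < \<sigma>" and "\<sigma> \<le> 1" and "r > 0"
    and "finite N"
    and "analytic2_on (fourier N fc) (dom_D k L r \<sigma>)"
    and "r * (2 * real CARD('n) * real_of_int (set_norm N)) < 1"
  shows "\<forall>\<sigma>'. 0 < \<sigma>' \<and> \<sigma>' < \<sigma> \<longrightarrow>
           analytic2_on (Qop k N fc) (dom_D k L r \<sigma>') \<and>
           supnormD k L r \<sigma>' (Qop k N fc)
             \<le> ereal (2 * (4 / (\<sigma> - \<sigma>')) ^ CARD('n) / L) * supnormD k L r \<sigma> (fourier N fc)"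
proof (intro allI impI, elim conjE)
  fix \<sigma>' :: real assume s1: "0 < \<sigma>'" and s2: "\<sigma>' < \<sigma>"
  note L = \<open>L > 0\<close> and fN = \<open>finite N\<close> and an = \<open>analytic2_on (fourier N fc) (dom_D k L r \<sigma>)\<close>
    and small = \<open>r * (2 * real CARD('n) * real_of_int (set_norm N)) < 1\<close>
  define K where "K = set_norm N"
  define N' where "N' = {\<mu>\<in>N. \<mu> $ k \<noteq> 0}"
  have N'N: "N' \<subseteq> N" and fN': "finite N'" using fN unfolding N'_def by auto
  have Kb: "\<forall>\<mu>\<in>N. \<forall>i. \<bar>\<mu>$i\<bar> \<le> K" unfolding K_def using mu_bound[OF fN] by auto
  have K0: "K \<ge> 0" unfolding K_def using set_norm_nonneg[OF fN] .
  have Icond: "\<forall>i. cmod (fst z $ i - (if i = k then complex_of_real L else 0)) < r * L"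
    if "z \<in> dom_D k L r s" for z s using that unfolding dom_D_def by (auto simp: case_prod_beta)
  have den: "cmod (cdot (fst z) \<mu>) > L / 2" if "z \<in> dom_D k L r s" "\<mu> \<in> N'" for z s \<mu>
    using that Icond[OF that(1)] by (intro denom_bound[OF L _ _ _ small[folded K_def]]) (auto simp: N'_def Kb)
  have Qeq: "Qop k N fc = (\<lambda>x. - \<i> * (\<Sum>\<mu>\<in>N'. fc \<mu> (fst x) * inverse (cdot (fst x) \<mu>) * exp (\<i> * cdot (snd x) \<mu>)))"
    unfolding Qop_def N'_def by (auto simp: divide_inverse)
  define M where "M = nat (2*K+1)"
  have M: "int M = 2*K+1" "M > 0" using K0 unfolding M_def by auto
  have diff: "\<forall>\<nu>\<in>N. \<forall>i. \<bar>\<nu>$i - \<mu>$i\<bar> < int M" if "\<mu> \<in> N" for \<mu>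
  proof (intro ballI allI)
    fix \<nu> i assume "\<nu> \<in> N"
    then have "\<bar>\<nu>$i\<bar> \<le> K" "\<bar>\<mu>$i\<bar> \<le> K" using Kb that by auto
    then show "\<bar>\<nu>$i - \<mu>$i\<bar> < int M" using M by linarith
  qed
  define g where "g \<mu> I = (\<Sum>j\<in>grid M. fourier N fc (I, gpt M 0 j) * exp (- (\<i> * cdot (gpt M 0 j) \<mu>))) * inverse (of_nat M ^ CARD('n))" for \<mu> I
  have fcg: "fc \<mu> I = g \<mu> I" if "\<mu> \<in> N" for \<mu> I
    unfolding g_def using coeff_extract[OF fN that diff[OF that] M(2), of fc I 0] by (simp add: divide_inverse)
  have Qeq2: "Qop k N fc = (\<lambda>x. - \<i> * (\<Sum>\<mu>\<in>N'. g \<mu> (fst x) * inverse (cdot (fst x) \<mu>) * exp (\<i> * cdot (snd x) \<mu>)))"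
    unfolding Qeq using N'N by (intro ext arg_cong[where f="\<lambda>s. - \<i> * s"] sum.cong) (auto simp: fcg)
  have realpt: "(fst z, gpt M 0 j) \<in> dom_D k L r \<sigma>" if "z \<in> dom_D k L r \<sigma>'" for z j
    using Icond[OF that] \<open>0 < \<sigma>\<close> unfolding dom_D_def by (auto simp: gpt_def)
  have "an2 (Qop k N fc) z" if z: "z \<in> dom_D k L r \<sigma>'" for z
  proof -
    have ag: "an2 (\<lambda>x. g \<mu> (fst x)) z" for \<mu>
      unfolding g_def
    proof (intro an2_mult an2_const an2_sum finite_grid an2_exp)
      fix j
      show "an2 (\<lambda>x. fourier N fc (fst x, gpt M 0 j)) z"
        by (rule an2_slice) (use an realpt[OF z] in \<open>auto simp: analytic2_on_def an2_def\<close>)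
    qed
    show ?thesis unfolding Qeq2
    proof (intro an2_mult an2_const an2_sum fN' an2_exp ag an2_inverse an2_cdot_fst an2_cdot_snd)
      fix \<mu> assume "\<mu> \<in> N'"
      then show "cdot (fst z) \<mu> \<noteq> 0" using den[OF z] L by fastforce
    qed
  qed
  then have A: "analytic2_on (Qop k N fc) (dom_D k L r \<sigma>')"
    unfolding analytic2_on_def an2_def by blast
  define C where "C = 2 * (4 / (\<sigma> - \<sigma>')) ^ CARD('n) / L"
  have C0: "C > 0" unfolding C_def using s2 L by auto
  define z0 :: "(complex^'n) \<times> (complex^'n)" where "z0 = ((\<chi> i. if i = k then complex_of_real L else 0), 0)"
  have z0: "z0 \<in> dom_D k L r \<sigma>" unfolding z0_def dom_D_def using L \<open>r > 0\<close> \<open>0 < \<sigma>\<close> by auto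
  have B: "supnormD k L r \<sigma>' (Qop k N fc) \<le> ereal C * supnormD k L r \<sigma> (fourier N fc)"
  proof (cases "supnormD k L r \<sigma> (fourier N fc) = \<infinity>")
    case True then show ?thesis using C0 by simp
  next
    case False
    have ge: "ereal (cmod (fourier N fc z0)) \<le> supnormD k L r \<sigma> (fourier N fc)"
      unfolding supnormD_def using z0 by (rule SUP_upper)
    then obtain S where S: "supnormD k L r \<sigma> (fourier N fc) = ereal S"
      using False by (cases "supnormD k L r \<sigma> (fourier N fc)") auto
    have S0: "S \<ge> 0" using ge S by (metis ereal_less_eq(3) norm_ge_zero order_trans)
    have hS: "\<forall>p\<in>dom_D k L r \<sigma>. cmod (fourier N fc p) \<le> S"
    proof
      fix p assume "p \<in> dom_D k L r \<sigma>"
      then have "ereal (cmod (fourier N fc p)) \<le> ereal S"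
        unfolding S[symmetric] supnormD_def by (rule SUP_upper)
      then show "cmod (fourier N fc p) \<le> S" by simp
    qed
    define \<Delta> where "\<Delta> = \<sigma> - \<sigma>'"
    define \<delta> where "\<delta> = 2 * \<Delta> / 3"
    define t where "t = \<sigma>' + \<delta>"
    have \<Delta>: "0 < \<Delta>" "\<Delta> \<le> 1" unfolding \<Delta>_def using s1 s2 \<open>\<sigma> \<le> 1\<close> by auto
    have \<delta>0: "\<delta> > 0" unfolding \<delta>_def using \<Delta> by auto
    have t: "0 \<le> t" "t < \<sigma>" unfolding t_def \<delta>_def \<Delta>_def using s1 s2 by (auto simp: field_simps)
    have pt: "cmod (Qop k N fc z) \<le> C * S" if z: "z \<in> dom_D k L r \<sigma>'" for z
    proof -
      have Imb: "\<forall>i. \<bar>Im (snd z $ i)\<bar> < \<sigma>'" using z unfolding dom_D_def by (auto simp: case_prod_beta)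
      have tm: "cmod (fc \<mu> (fst z) * inverse (cdot (fst z) \<mu>) * exp (\<i> * cdot (snd z) \<mu>))
           \<le> (2 * S / L) * exp (- \<delta> * l1 \<mu>)" if mu: "\<mu> \<in> N'" for \<mu>
      proof -
        have a: "cmod (fc \<mu> (fst z)) \<le> S * exp (- t * l1 \<mu>)"
          using coeff_bound[OF fN _ Kb Icond[OF z] t hS] mu N'N by auto
        have b: "cmod (inverse (cdot (fst z) \<mu>)) \<le> 2 / L"
        proof -
          have "L / 2 < cmod (cdot (fst z) \<mu>)" using den[OF z mu] .
          then have "inverse (cmod (cdot (fst z) \<mu>)) \<le> inverse (L / 2)"
            using L by (intro le_imp_inverse_le) auto
          then show ?thesis by (simp add: norm_inverse)
        qed
        have c: "cmod (exp (\<i> * cdot (snd z) \<mu>)) \<le> exp (\<sigma>' * l1 \<mu>)"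
          by (rule exp_phi_bound[OF Imb])
        have "cmod (fc \<mu> (fst z) * inverse (cdot (fst z) \<mu>) * exp (\<i> * cdot (snd z) \<mu>))
            \<le> (S * exp (- t * l1 \<mu>)) * (2 / L) * exp (\<sigma>' * l1 \<mu>)"
          unfolding norm_mult using a b c S0 L
          by (intro mult_mono) (auto intro!: mult_nonneg_nonneg divide_nonneg_pos)
        also have "\<dots> = (2 * S / L) * (exp (- t * l1 \<mu>) * exp (\<sigma>' * l1 \<mu>))" by simp
        also have "exp (- t * l1 \<mu>) * exp (\<sigma>' * l1 \<mu>) = exp (- \<delta> * l1 \<mu>)"
          unfolding t_def by (simp add: exp_add[symmetric] algebra_simps)
        finally show ?thesis .
      qed
      have "cmod (Qop k N fc z) = cmod (\<Sum>\<mu>\<in>N'. fc \<mu> (fst z) * inverse (cdot (fst z) \<mu>) * exp (\<i> * cdot (snd z) \<mu>))"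
        unfolding Qeq by (simp add: norm_mult)
      also have "\<dots> \<le> (\<Sum>\<mu>\<in>N'. (2 * S / L) * exp (- \<delta> * l1 \<mu>))"
        by (rule order_trans[OF norm_sum], rule sum_mono, rule tm)
      also have "\<dots> \<le> (\<Sum>\<mu>\<in>N. (2 * S / L) * exp (- \<delta> * l1 \<mu>))"
        by (rule sum_mono2[OF fN N'N]) (use S0 L in auto)
      also have "\<dots> = (2 * S / L) * (\<Sum>\<mu>\<in>N. exp (- \<delta> * l1 \<mu>))" by (simp add: sum_distrib_left)
      also have "\<dots> \<le> (2 * S / L) * (1 + 2 / \<delta>) ^ CARD('n)"
        using box_sum[OF fN Kb \<delta>0] S0 L by (intro mult_left_mono) auto
      also have "\<dots> \<le> (2 * S / L) * (4 / \<Delta>) ^ CARD('n)"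
      proof (intro mult_left_mono power_mono)
        have "1 + 2 / \<delta> = 1 + 3 / \<Delta>" unfolding \<delta>_def using \<Delta> by (simp add: field_simps)
        also have "\<dots> \<le> 4 / \<Delta>" using \<Delta> by (simp add: field_simps)
        finally show "1 + 2 / \<delta> \<le> 4 / \<Delta>" .
      qed (use S0 L \<delta>0 in auto)
      also have "\<dots> = C * S" unfolding C_def \<Delta>_def by simp
      finally show ?thesis .
    qed
    have "supnormD k L r \<sigma>' (Qop k N fc) \<le> ereal (C * S)"
      unfolding supnormD_def by (rule SUP_least) (use pt in auto)
    then show ?thesis unfolding S by simp
  qed
  show "analytic2_on (Qop k N fc) (dom_D k L r \<sigma>') \<and>
           supnormD k L r \<sigma>' (Qop k N fc)
             \<le> ereal (2 * (4 / (\<sigma> - \<sigma>')) ^ CARD('n) / L) * supnormD k L r \<sigma> (fourier N fc)"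
    using A B unfolding C_def by simp
qed
end
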